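(* The space $X_{\mathrm{crs}}$ is not regular: the origin $x$ and the closed set $A=\bigcup_{n\ge1} e_n^0$ (which does not contain $x$) cannot be separated by disjoint open sets; indeed every open neighborhood of $x$ meets every open neighborhood of $A$.
   Context: Let $X$ be the following 2-dimensional CW-complex. Its 0-cells are $e_n^0$, $n\ge 0$; the point $x=e_0^0$ is called the origin. For each $n\ge1$ there are two 1-cells $e_n^1, e_{-n}^1$, each joining $x$ to $e_n^0$, so that $e_0^0\cup e_n^0\cup e_n^1\cup e_{-n}^1$ is homeomorphic to a circle; for each $n\ge1$ a 2-cell $e_n^2$ is attached via a homeomorphism $\varphi_n:S^1\to e_0^0\cup e_n^0\cup e_n^1\cup e_{-n}^1$. Thus each closed 2-cell $\overline{e_n^2}$ is a closed disk having $x$ and $e_n^0$ on its boundary, and $X$ is a wedge at $x$ of countably many closed disks, carrying the CW (weak) topology. The coarser topology on the set $X$ consists of all subsets $U\subset X$ that are open in the CW-topology and either do not contain $x$, or contain $\overline{e_n^2}\smallsetminus e_n^0$ for all but finitely many $n\ge1$. The set $X$ with this coarser topology is denoted $X_{\mathrm{crs}}$. *)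

theory Defs
  imports "HOL-Analysis.Analysis"
begin

text \<open>Points are of type (nat * complex) option: None is the origin x = e_0^0.
  The closed disk number n (n >= 1) is the closed unit disk cball 0 1 in the plane,
  whose boundary point -1 is glued to the origin; the boundary point 1 is the 0-cell e_n^0,
  the upper/lower open half circles are the 1-cells e_n^1, e_(-n)^1, and the open unit disk
  is the 2-cell e_n^2.\<close>

definition cw_pt :: "(nat \<times> complex) option set" where
  "cw_pt = {None} \<union> {Some (n, z) | n z. n \<ge> 1 \<and> z \<in> cball 0 1 \<and> z \<noteq> -1}"

definition disk_map :: "nat \<Rightarrow> complex \<Rightarrow> (nat \<times> complex) option" where
  "disk_map n z = (if z = -1 then None else Some (n, z))"

definition origin :: "(nat \<times> complex) option" where
  "origin = None"

definition vertex :: "nat \<Rightarrow> (nat \<times> complex) option" where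
  "vertex n = disk_map n 1"

definition disk_minus_vertex :: "nat \<Rightarrow> (nat \<times> complex) option set" where
  "disk_minus_vertex n = disk_map n ` (cball 0 1 - {1})"

definition cw_open :: "(nat \<times> complex) option set \<Rightarrow> bool" where
  "cw_open U \<longleftrightarrow> U \<subseteq> cw_pt \<and>
     (\<forall>n\<ge>1. openin (top_of_set (cball (0::complex) 1)) {z \<in> cball 0 1. disk_map n z \<in> U})"

definition crs_open :: "(nat \<times> complex) option set \<Rightarrow> bool" where
  "crs_open U \<longleftrightarrow> cw_open U \<and>
     (origin \<notin> U \<or> finite {n. n \<ge> 1 \<and> \<not> disk_minus_vertex n \<subseteq> U})"

definition X_crs :: "(nat \<times> complex) option topology" where
  "X_crs = topology crs_open"

end

theory Submission
  imports Defs
begin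

abbreviation "pre n U \<equiv> {z \<in> cball (0::complex) 1. disk_map n z \<in> U}"

lemma bad_Int: "{n. n \<ge> 1 \<and> \<not> disk_minus_vertex n \<subseteq> S \<inter> T}
  \<subseteq> {n. n \<ge> 1 \<and> \<not> disk_minus_vertex n \<subseteq> S} \<union> {n. n \<ge> 1 \<and> \<not> disk_minus_vertex n \<subseteq> T}"
  by auto

lemma istop: "istopology crs_open"
  unfolding istopology_def
proof (intro conjI allI impI)
  fix S T assume S: "crs_open S" and T: "crs_open T"
  have "cw_open (S \<inter> T)"
  proof -
    have "\<And>n. pre n (S \<inter> T) = pre n S \<inter> pre n T" by auto
    thus ?thesis using S T unfolding crs_open_def cw_open_def
      by (auto intro!: openin_Int)
  qed
  moreover have "origin \<notin> S \<inter> T \<or> finite {n. n \<ge> 1 \<and> \<not> disk_minus_vertex n \<subseteq> S \<inter> T}"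
  proof (cases "origin \<in> S \<inter> T")
    case True
    then have "finite {n. n \<ge> 1 \<and> \<not> disk_minus_vertex n \<subseteq> S}"
      "finite {n. n \<ge> 1 \<and> \<not> disk_minus_vertex n \<subseteq> T}"
      using S T unfolding crs_open_def by auto
    then show ?thesis using bad_Int[of S T] by (meson finite_Un finite_subset)
  qed auto
  ultimately show "crs_open (S \<inter> T)" unfolding crs_open_def by auto
next
  fix K assume K: "\<forall>k\<in>K. crs_open k"
  have "cw_open (\<Union>K)"
    unfolding cw_open_def
  proof (intro conjI allI impI)
    show "\<Union>K \<subseteq> cw_pt" using K unfolding crs_open_def cw_open_def by auto
    fix n :: nat assume n: "n \<ge> 1"
    have "pre n (\<Union>K) = \<Union>((\<lambda>k. pre n k) ` K)" by auto
    moreover have "\<forall>k\<in>K. openin (top_of_set (cball (0::complex) 1)) (pre n k)"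
      using K n unfolding crs_open_def cw_open_def by auto
    ultimately show "openin (top_of_set (cball (0::complex) 1)) (pre n (\<Union>K))"
      by (auto intro!: openin_Union)
  qed
  moreover have "origin \<notin> \<Union>K \<or> finite {n. n \<ge> 1 \<and> \<not> disk_minus_vertex n \<subseteq> \<Union>K}"
  proof (cases "origin \<in> \<Union>K")
    case True
    then obtain k where k: "k \<in> K" "origin \<in> k" by auto
    then have "finite {n. n \<ge> 1 \<and> \<not> disk_minus_vertex n \<subseteq> k}"
      using K unfolding crs_open_def by auto
    moreover have "{n. n \<ge> 1 \<and> \<not> disk_minus_vertex n \<subseteq> \<Union>K}
        \<subseteq> {n. n \<ge> 1 \<and> \<not> disk_minus_vertex n \<subseteq> k}" using k by auto
    ultimately show ?thesis by (meson finite_subset)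
  qed auto
  ultimately show "crs_open (\<Union>K)" unfolding crs_open_def by auto
qed

lemma openin_crs: "openin X_crs U \<longleftrightarrow> crs_open U"
  unfolding X_crs_def using istop by (simp add: topology_inverse')

lemma cw_pt_open: "crs_open cw_pt"
proof -
  have "\<And>n. n \<ge> 1 \<Longrightarrow> pre n cw_pt = cball 0 1"
    by (auto simp: cw_pt_def disk_map_def)
  moreover have "{n. n \<ge> 1 \<and> \<not> disk_minus_vertex n \<subseteq> cw_pt} = {}"
    by (auto simp: cw_pt_def disk_minus_vertex_def disk_map_def)
  moreover have "cw_pt \<subseteq> cw_pt" by simp
  ultimately show ?thesis unfolding crs_open_def cw_open_def
    by (metis finite.emptyI openin_topspace topspace_euclidean_subtopology)
qed

lemma origin_top: "origin \<in> topspace X_crs"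
proof -
  have "origin \<in> cw_pt" by (simp add: cw_pt_def origin_def)
  thus ?thesis using cw_pt_open openin_crs openin_subset by blast
qed

definition "AA = {vertex n | n. n \<ge> 1}"

lemma closedA: "closedin X_crs AA"
proof -
  have sub: "AA \<subseteq> cw_pt" by (auto simp: AA_def cw_pt_def vertex_def disk_map_def)
  have "crs_open (cw_pt - AA)"
  proof -
    have "\<And>n. n \<ge> 1 \<Longrightarrow> pre n (cw_pt - AA) = cball 0 1 - {1}"
      by (auto simp: cw_pt_def disk_map_def AA_def vertex_def)
    moreover have "openin (top_of_set (cball (0::complex) 1)) (cball 0 1 - {1})"
      by (simp add: openin_diff)
    moreover have "{n. n \<ge> 1 \<and> \<not> disk_minus_vertex n \<subseteq> cw_pt - AA} = {}"
      by (auto simp: cw_pt_def disk_minus_vertex_def disk_map_def AA_def vertex_def)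
    moreover have "cw_pt - AA \<subseteq> cw_pt" by auto
    ultimately show ?thesis unfolding crs_open_def cw_open_def
      by (metis finite.emptyI)
  qed
  moreover have "topspace X_crs = cw_pt"
  proof
    show "topspace X_crs \<subseteq> cw_pt"
      by (auto simp: topspace_def openin_crs crs_open_def cw_open_def)
    show "cw_pt \<subseteq> topspace X_crs" using cw_pt_open openin_crs openin_subset by blast
  qed
  ultimately show ?thesis using sub by (simp add: closedin_def openin_crs)
qed

lemma originA: "origin \<notin> AA"
  by (auto simp: AA_def vertex_def disk_map_def origin_def)

lemma meet:
  assumes U: "crs_open U" and V: "crs_open V" and o: "origin \<in> U" and A: "AA \<subseteq> V"
  shows "U \<inter> V \<noteq> {}"
proof -
  have fin: "finite {n. n \<ge> 1 \<and> \<not> disk_minus_vertex n \<subseteq> U}"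
    using U o unfolding crs_open_def by auto
  obtain n where n: "n \<ge> 1" "disk_minus_vertex n \<subseteq> U"
  proof -
    obtain m where "m \<notin> {n. n \<ge> 1 \<and> \<not> disk_minus_vertex n \<subseteq> U} \<union> {0}"
      using ex_new_if_finite[of "_ \<union> {0}"] fin by (metis finite_Un finite.emptyI finite.insertI infinite_UNIV_nat)
    thus ?thesis using that by (metis (mono_tags, lifting) Un_iff mem_Collect_eq insertI1 less_one not_le)
  qed
  have op: "openin (top_of_set (cball (0::complex) 1)) (pre n V)"
    using V n unfolding crs_open_def cw_open_def by auto
  have "vertex n \<in> V" using A n by (auto simp: AA_def)
  hence "1 \<in> pre n V" by (simp add: vertex_def)
  then obtain e where e: "e > 0" "\<forall>x'\<in>cball 0 1. dist x' 1 < e \<longrightarrow> x' \<in> pre n V"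
    using op unfolding openin_euclidean_subtopology_iff by blast
  define z :: complex where "z = complex_of_real (1 - min e 1 / 2)"
  have "norm z = \<bar>1 - min e 1 / 2\<bar>" unfolding z_def by (simp only: norm_of_real)
  also have "\<dots> \<le> 1" using e by auto
  finally have zc: "z \<in> cball 0 1" by simp
  have "dist z 1 < e" using e by (simp add: z_def dist_norm)
  hence zV: "disk_map n z \<in> V" using e zc by auto
  have "z \<noteq> 1" using e by (simp add: z_def)
  hence "disk_map n z \<in> disk_minus_vertex n" using zc by (simp add: disk_minus_vertex_def)
  thus ?thesis using n zV by auto
qed

theorem mainTheorem3:
  shows "\<not> regular_space X_crs
    \<and> closedin X_crs {vertex n | n. n \<ge> 1}
    \<and> origin \<notin> {vertex n | n. n \<ge> 1}
    \<and> (\<forall>U V. openin X_crs U \<and> openin X_crs V \<and> origin \<in> U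
              \<and> {vertex n | n. n \<ge> 1} \<subseteq> V \<longrightarrow> U \<inter> V \<noteq> {})"
proof -
  have M: "\<forall>U V. openin X_crs U \<and> openin X_crs V \<and> origin \<in> U
              \<and> AA \<subseteq> V \<longrightarrow> U \<inter> V \<noteq> {}"
    using meet openin_crs by blast
  have "\<not> regular_space X_crs"
  proof
    assume "regular_space X_crs"
    then obtain U V where "openin X_crs U" "openin X_crs V" "origin \<in> U" "AA \<subseteq> V" "disjnt U V"
      using closedA originA origin_top unfolding regular_space_def by (metis DiffI)
    thus False using M by (auto simp: disjnt_def)
  qed
  thus ?thesis using M closedA originA unfolding AA_def by blast
qed

end
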